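(* Let $G$ be a graph and $u$ a vertex of $G$ such that the configuration $\overline{\mathbf{c}_u}$ is solvable. Then $\mathbf{p}(u)=0$ for every pattern $\mathbf{p}$ with $N(G)\mathbf{p}=\overline{\mathbf{c}_u}$.
   Context: For a finite simple graph $G$ with vertex set $\{v_1,\dots,v_n\}$, the closed adjacency matrix $N(G)$ is the $n\times n$ matrix over $\mathbb{Z}_2$ whose $(i,j)$ entry is $1$ iff $i=j$ or $v_i$ is adjacent to $v_j$. Vectors in $\mathbb{Z}_2^{V(G)}$ are patterns/configurations; a configuration $\mathbf{c}$ is solvable if $N(G)\mathbf{p}=\mathbf{c}$ for some pattern $\mathbf{p}$. $\mathbf{1}$ is the all-ones vector, $\mathbf{c}_u$ is the vector with $\mathbf{c}_u(v)=1$ iff $v=u$, and $\overline{\mathbf{c}_u}:=\mathbf{c}_u+\mathbf{1}$. *)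

theory Defs
  imports "HOL-Analysis.Analysis" "HOL-Library.Z2"
begin

definition simple_graph :: "('n::finite \<Rightarrow> 'n \<Rightarrow> bool) \<Rightarrow> bool" where
  "simple_graph E \<longleftrightarrow> (\<forall>x y. E x y \<longrightarrow> E y x) \<and> (\<forall>x. \<not> E x x)"

definition closed_adj :: "('n::finite \<Rightarrow> 'n \<Rightarrow> bool) \<Rightarrow> bit ^ 'n ^ 'n" where
  "closed_adj E = (\<chi> i j. if i = j \<or> E i j then 1 else 0)"

definition unit_config :: "'n::finite \<Rightarrow> bit ^ 'n" where
  "unit_config u = (\<chi> v. if v = u then 1 else 0)"

definition co_unit_config :: "'n::finite \<Rightarrow> bit ^ 'n" where
  "co_unit_config u = unit_config u + (\<chi> v. 1)"

definition solvable :: "('n::finite \<Rightarrow> 'n \<Rightarrow> bool) \<Rightarrow> bit ^ 'n \<Rightarrow> bool" where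
  "solvable E c \<longleftrightarrow> (\<exists>p. closed_adj E *v p = c)"

end

theory Submission
  imports Defs
begin

lemma bit_self_add: "(x::bit) + x = 0"
  by (cases x) auto

lemma sym_double_sum:
  fixes f :: "'a \<Rightarrow> 'a \<Rightarrow> bit"
  assumes sym: "\<And>i j. f i j = f j i" and "finite A"
  shows "(\<Sum>i\<in>A. \<Sum>j\<in>A. f i j) = (\<Sum>i\<in>A. f i i)"
  using \<open>finite A\<close>
proof (induction A rule: finite_induct)
  case empty then show ?case by simp
next
  case (insert x A)
  have "(\<Sum>i\<in>insert x A. \<Sum>j\<in>insert x A. f i j)
      = (\<Sum>i\<in>insert x A. f i x + (\<Sum>j\<in>A. f i j))"
    by (rule sum.cong[OF refl]) (rule sum.insert[OF insert(1,2)])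
  also have "\<dots> = (\<Sum>i\<in>insert x A. f i x) + (\<Sum>i\<in>insert x A. \<Sum>j\<in>A. f i j)"
    by (rule sum.distrib)
  also have "\<dots> = f x x + (\<Sum>i\<in>A. f i x) + ((\<Sum>j\<in>A. f x j) + (\<Sum>i\<in>A. \<Sum>j\<in>A. f i j))"
    by (simp only: sum.insert[OF insert(1,2)])
  also have "(\<Sum>j\<in>A. f x j) = (\<Sum>i\<in>A. f i x)" using sym by simp
  also have "f x x + (\<Sum>i\<in>A. f i x) + ((\<Sum>i\<in>A. f i x) + (\<Sum>i\<in>A. \<Sum>j\<in>A. f i j))
      = f x x + ((\<Sum>i\<in>A. f i x) + (\<Sum>i\<in>A. f i x)) + (\<Sum>i\<in>A. \<Sum>j\<in>A. f i j)"
    by (simp only: add.assoc add.left_commute add.commute)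
  also have "\<dots> = f x x + (\<Sum>i\<in>A. f i i)" using insert by (simp only: bit_self_add add_0_left add_0_right)
  finally show ?case by (simp only: sum.insert[OF insert(1,2)])
qed

theorem lemma2p1:
  fixes E :: "'n::finite \<Rightarrow> 'n \<Rightarrow> bool" and u :: 'n
  assumes "simple_graph E"
    and "solvable E (co_unit_config u)"
  shows "\<forall>p. closed_adj E *v p = co_unit_config u \<longrightarrow> p $ u = 0"
proof (intro allI impI)
  fix p :: "bit ^ 'n"
  assume h: "closed_adj E *v p = co_unit_config u"
  let ?N = "closed_adj E"
  let ?c = "co_unit_config u"
  have symN: "\<And>i j. ?N $ i $ j = ?N $ j $ i"
    using assms(1) unfolding simple_graph_def closed_adj_def by auto
  have diagN: "\<And>i. ?N $ i $ i = 1" unfolding closed_adj_def by simp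
  have "(\<Sum>i\<in>UNIV. p $ i * ?c $ i) = (\<Sum>i\<in>UNIV. p $ i * (?N *v p) $ i)"
    using h by (simp only:)
  also have "\<dots> = (\<Sum>i\<in>UNIV. \<Sum>j\<in>UNIV. p $ i * ?N $ i $ j * p $ j)"
    unfolding matrix_vector_mult_def vec_lambda_beta sum_distrib_left
    by (rule sum.cong[OF refl], rule sum.cong[OF refl]) (simp only: mult.assoc)
  also have "\<dots> = (\<Sum>i\<in>UNIV. p $ i * ?N $ i $ i * p $ i)"
    by (rule sym_double_sum) (simp only: symN mult.commute mult.left_commute, simp)
  also have "\<dots> = (\<Sum>i\<in>UNIV. p $ i)"
  proof (rule sum.cong[OF refl])
    fix i show "p $ i * ?N $ i $ i * p $ i = p $ i"
      unfolding diagN by (cases "p $ i") simp_all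
  qed
  finally have A: "(\<Sum>i\<in>UNIV. p $ i * ?c $ i) = (\<Sum>i\<in>UNIV. p $ i)" .
  have "(\<Sum>i\<in>UNIV. p $ i * (if i = u then 1 else 0)) = (\<Sum>i\<in>UNIV. (if u = i then p $ i else 0))"
    by (rule sum.cong[OF refl]) auto
  also have "\<dots> = p $ u" unfolding sum.delta'[OF finite_class.finite_UNIV] by (simp only: UNIV_I if_True)
  finally have B: "p $ u = (\<Sum>i\<in>UNIV. p $ i * (if i = u then 1 else 0))" by (rule sym)
  have C: "(\<Sum>i\<in>UNIV. p $ i * (if i = u then 1 else 0)) = (\<Sum>i\<in>UNIV. p $ i * (?c $ i + 1))"
  proof (rule sum.cong[OF refl])
    fix i show "p $ i * (if i = u then 1 else 0) = p $ i * (?c $ i + 1)"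
      unfolding co_unit_config_def unit_config_def vector_add_component vec_lambda_beta
      by (cases "i = u") (simp_all only: if_True if_False bit_self_add add_0_left, simp_all)
  qed
  have D: "(\<Sum>i\<in>UNIV. p $ i * (?c $ i + 1)) = (\<Sum>i\<in>UNIV. p $ i * ?c $ i) + (\<Sum>i\<in>UNIV. p $ i)"
    by (simp only: distrib_left mult_1_right sum.distrib)
  show "p $ u = 0" using B C D A by (simp only: bit_self_add)
qed

end
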